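(* Let $\Sigma$ be an alphabet with $|\Sigma|\ge 3$, let $f,g\colon\Sigma^*\to\Sigma^*$, and suppose $f$ is RCP and either there is a letter $a\in\Sigma$ with $f(x)=a\,g(x)$ for all $x\in\Sigma^*$, or $f(x)=x\,g(x)$ for all $x\in\Sigma^*$. Then $g$ is RCP.
   Context: $\Sigma^*$ is the free monoid over $\Sigma$ (finite words, concatenation, empty word $\varepsilon$). A function $f\colon(\Sigma^* )^k\to\Sigma^*$ is RCP if for every monoid morphism $\varphi\colon\Sigma^*\to\Sigma^*$ and all $u_1,\ldots,u_k,v_1,\ldots,v_k$ with $\varphi(u_i)=\varphi(v_i)$ for all $i$, we have $\varphi(f(u_1,\ldots,u_k))=\varphi(f(v_1,\ldots,v_k))$. *)

theory Defs
  imports Main "HOL-Library.Cardinality"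
begin

definition monoid_morphism :: "('a list \<Rightarrow> 'b list) \<Rightarrow> bool" where
  "monoid_morphism \<phi> \<longleftrightarrow> \<phi> [] = [] \<and> (\<forall>u v. \<phi> (u @ v) = \<phi> u @ \<phi> v)"

text \<open>RCP for a unary function (the case k = 1 of the general definition).\<close>
definition RCP :: "('a list \<Rightarrow> 'a list) \<Rightarrow> bool" where
  "RCP f \<longleftrightarrow> (\<forall>\<phi> :: 'a list \<Rightarrow> 'a list. monoid_morphism \<phi> \<longrightarrow>
     (\<forall>u v. \<phi> u = \<phi> v \<longrightarrow> \<phi> (f u) = \<phi> (f v)))"

end

theory Submission
  imports Defs
begin

theorem mainTheorem11:
  fixes f g :: "'a::finite list \<Rightarrow> 'a list"
  assumes "CARD('a) \<ge> 3"
    and "RCP f"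
    and "(\<exists>a. \<forall>x. f x = a # g x) \<or> (\<forall>x. f x = x @ g x)"
  shows "RCP g"
  unfolding RCP_def
proof (intro allI impI)
  fix \<phi> :: "'a list \<Rightarrow> 'a list" and u v
  assume m: "monoid_morphism \<phi>" and e: "\<phi> u = \<phi> v"
  have hf: "\<phi> (f u) = \<phi> (f v)" using assms(2) m e unfolding RCP_def by blast
  have app: "\<And>x y. \<phi> (x @ y) = \<phi> x @ \<phi> y" using m unfolding monoid_morphism_def by blast
  from assms(3) show "\<phi> (g u) = \<phi> (g v)"
  proof
    assume "\<exists>a. \<forall>x. f x = a # g x"
    then obtain a where a: "\<And>x. f x = a # g x" by blast
    have "\<phi> ([a] @ g u) = \<phi> ([a] @ g v)" using hf a by (metis append_Cons append_Nil)
    then have "\<phi> [a] @ \<phi> (g u) = \<phi> [a] @ \<phi> (g v)" by (simp only: app)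
    then show ?thesis by simp
  next
    assume "\<forall>x. f x = x @ g x"
    then have "\<phi> (u @ g u) = \<phi> (v @ g v)" using hf by simp
    then have "\<phi> u @ \<phi> (g u) = \<phi> v @ \<phi> (g v)" by (simp only: app)
    then show ?thesis using e by simp
  qed
qed

end
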